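(* Let $\lambda_1,\lambda_2$, $\Omega$, $\varphi$, $f$ be as in the context, with $(c,\theta)\in\Omega$, and define $g:\mathbb{C}\to\mathbb{C}$ by $g(u+iv)=e^{f(u)+cv}e^{i\varphi(u)}$. Then $$g_{z\bar z}=\frac{2\left[\lambda_1^2(g+\bar g)-\lambda_2^2(g-\bar g)\right]}{\lambda_1^2(g+\bar g)^2-\lambda_2^2(g-\bar g)^2}\,g_zg_{\bar z},$$ and the Hopf differential of $g$ is $Q=\frac18e^{-i\theta}\,dz^2$.
   Context: Either $\lambda_1>\lambda_2>0$ or $\lambda_1=\lambda_2=1$. For $c>0$ put $\theta_c^+=\pi$ if $c>\sqrt2\lambda_1$ and $\theta_c^+=\arccos(1-c^2/\lambda_1^2)$ if $0<c\le\sqrt2\lambda_1$; $\Omega=\{(c,\theta): c>0,\ |\theta|<\theta_c^+\}$. For $(c,\theta)\in\Omega$: $D=\sin\theta/c$; $\varphi$ is the global solution of $\varphi'(u)=\sqrt{c^2+2\cos\theta\,B(u)-D^2B(u)^2}$, $\varphi(0)=0$, where $B(u)=\lambda_1^2\cos^2\varphi(u)+\lambda_2^2\sin^2\varphi(u)$; $f$ is the solution of $f'(u)=DB(u)$, $f(0)=0$. Here $z=u+iv$, $g_z=\frac12(g_u-ig_v)$, $g_{\bar z}=\frac12(g_u+ig_v)$, and the Hopf differential of $g$ is $Q=\frac{g_z\bar g_z}{\lambda_1^2(g+\bar g)^2-\lambda_2^2(g-\bar g)^2}dz^2$ with $\bar g_z=\partial_z(\bar g)$. *)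

theory Defs
  imports "HOL-Analysis.Analysis"
begin

definition theta_plus :: "real \<Rightarrow> real \<Rightarrow> real" where
  "theta_plus l1 c = (if c > sqrt 2 * l1 then pi else arccos (1 - c\<^sup>2 / l1\<^sup>2))"

definition Omega :: "real \<Rightarrow> (real \<times> real) set" where
  "Omega l1 = {(c, \<theta>). c > 0 \<and> \<bar>\<theta>\<bar> < theta_plus l1 c}"

definition Dconst :: "real \<Rightarrow> real \<Rightarrow> real" where
  "Dconst c \<theta> = sin \<theta> / c"

definition Bfun :: "real \<Rightarrow> real \<Rightarrow> (real \<Rightarrow> real) \<Rightarrow> real \<Rightarrow> real" where
  "Bfun l1 l2 \<phi> u = l1\<^sup>2 * (cos (\<phi> u))\<^sup>2 + l2\<^sup>2 * (sin (\<phi> u))\<^sup>2"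

definition pu :: "(complex \<Rightarrow> complex) \<Rightarrow> complex \<Rightarrow> complex" where
  "pu g z = vector_derivative (\<lambda>t::real. g (z + complex_of_real t)) (at 0)"

definition pv :: "(complex \<Rightarrow> complex) \<Rightarrow> complex \<Rightarrow> complex" where
  "pv g z = vector_derivative (\<lambda>t::real. g (z + \<i> * complex_of_real t)) (at 0)"

definition wz :: "(complex \<Rightarrow> complex) \<Rightarrow> complex \<Rightarrow> complex" where
  "wz g z = (pu g z - \<i> * pv g z) / 2"

definition wzb :: "(complex \<Rightarrow> complex) \<Rightarrow> complex \<Rightarrow> complex" where
  "wzb g z = (pu g z + \<i> * pv g z) / 2"

text \<open>Coefficient of dz^2 in the Hopf differential of g.\<close>
definition hopf :: "real \<Rightarrow> real \<Rightarrow> (complex \<Rightarrow> complex) \<Rightarrow> complex \<Rightarrow> complex" where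
  "hopf l1 l2 g z = wz g z * wz (\<lambda>w. cnj (g w)) z /
     ((complex_of_real l1)\<^sup>2 * (g z + cnj (g z))\<^sup>2 - (complex_of_real l2)\<^sup>2 * (g z - cnj (g z))\<^sup>2)"

end

theory Submission imports Defs begin

lemma pu_pv_form:
  fixes A A' :: "real \<Rightarrow> complex" and c :: real
  assumes dA: "\<And>u. (A has_vector_derivative A' u) (at u)"
  shows "pu (\<lambda>z. A (Re z) * of_real (exp (c * Im z))) z = A' (Re z) * of_real (exp (c * Im z))"
    and "pv (\<lambda>z. A (Re z) * of_real (exp (c * Im z))) z = A (Re z) * of_real (c * exp (c * Im z))"
proof -
  have "((\<lambda>t. A (Re z + t)) has_vector_derivative A' (Re z)) (at 0)"
  proof -
    have "((\<lambda>t. Re z + t) has_vector_derivative 1) (at (0::real))"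
      by (auto intro!: derivative_eq_intros)
    from vector_diff_chain_at[OF this, of A "A' (Re z)"] dA show ?thesis by (simp add: o_def)
  qed
  then have "((\<lambda>t. A (Re z + t) * of_real (exp (c * Im z))) has_vector_derivative A' (Re z) * of_real (exp (c * Im z))) (at 0)"
    by (rule has_vector_derivative_mult_left)
  then show "pu (\<lambda>z. A (Re z) * of_real (exp (c * Im z))) z = A' (Re z) * of_real (exp (c * Im z))"
    unfolding pu_def by (intro vector_derivative_at) simp
  have "((\<lambda>t. of_real (exp (c * (Im z + t)))) has_vector_derivative (of_real (exp (c * (Im z + 0)) * (c * 1)) :: complex)) (at 0)"
    by (intro has_vector_derivative_of_real) (auto intro!: derivative_eq_intros)
  then have "((\<lambda>t. A (Re z) * of_real (exp (c * (Im z + t)))) has_vector_derivative A (Re z) * of_real (c * exp (c * Im z))) (at 0)"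
    by (intro has_vector_derivative_mult_right) (simp add: mult.commute)
  then show "pv (\<lambda>z. A (Re z) * of_real (exp (c * Im z))) z = A (Re z) * of_real (c * exp (c * Im z))"
    unfolding pv_def by (intro vector_derivative_at) simp
qed

lemma alg1:
  fixes er ep C S p pp l1 l2 c D ct st B B' q q' :: real
  assumes B: "B = l1^2*C^2 + l2^2*S^2" and q: "q = D*B" and B': "B' = 2*(l2^2-l1^2)*C*S*p"
    and q': "q' = D*B'" and CS: "C^2+S^2=1" and p2: "p^2 = c^2 + 2*ct*B - D^2*B^2"
    and pp: "p*pp = (ct - D^2*B)*B'" and Bpos: "B > 0" and er: "er > 0" and ep: "ep > 0" and p0: "p \<noteq> 0"
  defines "E \<equiv> of_real er * (of_real C + \<i> * of_real S)"
    and "Ec \<equiv> of_real er * (of_real C - \<i> * of_real S)"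
    and "a \<equiv> of_real q + \<i> * of_real p" and "a' \<equiv> of_real q' + \<i> * of_real pp"
  shows "((E * a * (a + \<i> * of_real c) / 2 + E * a' / 2) * of_real ep - \<i> * (E * (a + \<i> * of_real c) / 2 * of_real (c * ep))) / 2
     = 2 * ((complex_of_real l1)\<^sup>2 * (E * of_real ep + Ec * of_real ep) - (complex_of_real l2)\<^sup>2 * (E * of_real ep - Ec * of_real ep))
           / ((complex_of_real l1)\<^sup>2 * (E * of_real ep + Ec * of_real ep)\<^sup>2 - (complex_of_real l2)\<^sup>2 * (E * of_real ep - Ec * of_real ep)\<^sup>2)
           * ((E * a * of_real ep - \<i> * (E * of_real (c * ep))) / 2) * ((E * a * of_real ep + \<i> * (E * of_real (c * ep))) / 2)"
proof -
  define k where "k = C*S*(l1^2-l2^2)"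
  have den: "(complex_of_real l1)\<^sup>2 * (E * of_real ep + Ec * of_real ep)\<^sup>2 - (complex_of_real l2)\<^sup>2 * (E * of_real ep - Ec * of_real ep)\<^sup>2
     = 4 * of_real er^2 * of_real ep^2 * of_real B"
  proof -
    have 1: "E * of_real ep + Ec * of_real ep = 2 * of_real er * of_real ep * of_real C"
      unfolding E_def Ec_def by (simp add: algebra_simps)
    have 2: "E * of_real ep - Ec * of_real ep = 2 * \<i> * of_real er * of_real ep * of_real S"
      unfolding E_def Ec_def by (simp add: algebra_simps)
    show ?thesis unfolding 1 2 B by (simp add: algebra_simps power2_eq_square)
  qed
  have num: "2 * ((complex_of_real l1)\<^sup>2 * (E * of_real ep + Ec * of_real ep) - (complex_of_real l2)\<^sup>2 * (E * of_real ep - Ec * of_real ep))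
     = 4 * of_real er * of_real ep * (of_real l1^2 * of_real C - \<i> * of_real l2^2 * of_real S)"
    unfolding E_def Ec_def by (simp add: algebra_simps power2_eq_square)
  have BB: "(of_real l1^2 * of_real C - \<i> * of_real l2^2 * of_real S) * (of_real C + \<i> * of_real S) = of_real B + \<i> * of_real k"
    unfolding B k_def by (simp add: algebra_simps power2_eq_square)
  let ?X = "of_real l1^2 * of_real C - \<i> * of_real l2^2 * of_real S :: complex"
  have h1: "a^2 + of_real c^2 = of_real (2*B*(D^2*B - ct)) + \<i> * of_real (2*D*B*p)"
  proof -
    have r: "q^2 - p^2 + c^2 = 2*B*(D^2*B - ct)" using p2 q by (simp add: algebra_simps power2_eq_square)
    have "a^2 + of_real c^2 = of_real (q^2 - p^2 + c^2) + \<i> * of_real (2*q*p)"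
      unfolding a_def by (simp add: algebra_simps power2_eq_square)
    moreover have r2: "2*q*p = 2*D*B*p" by (simp add: q)
    ultimately show ?thesis by (simp only: r r2)
  qed
  have h2: "pp = 2*k*(D^2*B - ct)"
  proof -
    have "p*pp = p*(2*k*(D^2*B - ct))" unfolding pp B' k_def by (simp add: algebra_simps)
    then show ?thesis using p0 by simp
  qed
  have h3: "a' * of_real B = \<i> * of_real k * (a^2 + of_real c^2)"
    unfolding h1 a'_def q' h2 B' k_def by (simp add: algebra_simps power2_eq_square)
  have L: "((E * a * (a + \<i> * of_real c) / 2 + E * a' / 2) * of_real ep - \<i> * (E * (a + \<i> * of_real c) / 2 * of_real (c * ep))) / 2
      = E * of_real ep * (a^2 + of_real c^2 + a') / 4"
    by (simp add: field_simps power2_eq_square)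
  have W: "((E * a * of_real ep - \<i> * (E * of_real (c * ep))) / 2) * ((E * a * of_real ep + \<i> * (E * of_real (c * ep))) / 2)
      = E * E * of_real ep^2 * (a^2 + of_real c^2) / 4"
    by (simp add: algebra_simps power2_eq_square)
  have XE: "?X * E = of_real er * (of_real B + \<i> * of_real k)"
    unfolding E_def BB[symmetric] by (simp add: algebra_simps)
  have nz: "of_real er * of_real ep * of_real B \<noteq> (0::complex)" using er ep Bpos by simp
  have "4 * of_real er * of_real ep * ?X / (4 * of_real er^2 * of_real ep^2 * of_real B) * (E * E * of_real ep^2 * (a^2 + of_real c^2) / 4)
      = (?X * E) * E * of_real ep * (a^2 + of_real c^2) / (4 * of_real er * of_real B)"
    using nz by (simp add: field_simps power2_eq_square)
  also have "\<dots> = E * of_real ep * ((of_real B + \<i> * of_real k) * (a^2 + of_real c^2)) / (4 * of_real B)"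
    unfolding XE using nz by (simp add: field_simps)
  also have "\<dots> = E * of_real ep * ((a^2 + of_real c^2 + a') * of_real B) / (4 * of_real B)"
    using h3 by (simp add: algebra_simps)
  also have "\<dots> = E * of_real ep * (a^2 + of_real c^2 + a') / 4"
    using nz by simp
  finally have F: "4 * of_real er * of_real ep * ?X / (4 * of_real er^2 * of_real ep^2 * of_real B) * (E * E * of_real ep^2 * (a^2 + of_real c^2) / 4)
     = E * of_real ep * (a^2 + of_real c^2 + a') / 4" .
  show ?thesis
    apply (subst L, subst num, subst den)
    apply (subst mult.assoc, subst W)
    using F by simp
qed
lemma key_ineq:
  fixes l1 c \<theta> :: real
  assumes l1: "l1 > 0" and c: "c > 0" and th: "\<bar>\<theta>\<bar> < theta_plus l1 c"
  shows "l1^2 * (1 - cos \<theta>) < c^2"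
proof (cases "c > sqrt 2 * l1")
  case True
  then have "(sqrt 2 * l1)^2 < c^2" using l1 by (intro power_strict_mono) auto
  then have "2 * l1^2 < c^2" by (simp add: power_mult_distrib)
  moreover have "l1^2 * (1 - cos \<theta>) \<le> l1^2 * 2" using cos_ge_minus_one[of \<theta>] by (intro mult_left_mono) auto
  ultimately show ?thesis by simp
next
  case False
  define x where "x = 1 - c^2 / l1^2"
  have "c^2 \<le> (sqrt 2 * l1)^2" using False c l1 by (intro power_mono) auto
  then have c2: "c^2 \<le> 2 * l1^2" by (simp add: power_mult_distrib)
  have x1: "x \<le> 1" using x_def by simp
  have xm1: "-1 \<le> x" using c2 l1 unfolding x_def by (simp add: field_simps)
  have "\<bar>\<theta>\<bar> < arccos x" using th False unfolding theta_plus_def x_def by simp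
  then have "cos (arccos x) < cos \<bar>\<theta>\<bar>"
    using arccos_lbound[OF xm1 x1] arccos_ubound[OF xm1 x1]
    by (subst cos_mono_less_eq) auto
  then have "x < cos \<theta>" using xm1 x1 by simp
  then have "1 - cos \<theta> < c^2 / l1^2" unfolding x_def by simp
  then show ?thesis using l1 by (simp add: field_simps)
qed

lemma Q_pos:
  fixes l1 c \<theta> B :: real
  assumes l1: "l1 > 0" and c: "c > 0" and th: "\<bar>\<theta>\<bar> < theta_plus l1 c" and B: "0 < B" "B \<le> l1^2"
  shows "c^2 + 2 * cos \<theta> * B - (sin \<theta> / c)^2 * B^2 > 0"
proof -
  have k: "l1^2 * (1 - cos \<theta>) < c^2" by (rule key_ineq[OF l1 c th])
  have "B * (1 - cos \<theta>) \<le> l1^2 * (1 - cos \<theta>)" using B cos_le_one[of \<theta>] by (intro mult_right_mono) auto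
  with k have f1: "c^2 + cos \<theta> * B - B > 0" by (simp add: algebra_simps)
  have "B * (1 + cos \<theta>) \<ge> 0" proof -
    have "0 \<le> 1 + cos \<theta>" using cos_ge_minus_one[of \<theta>] by linarith
    then show ?thesis using B by simp
  qed
  then have f2: "c^2 + cos \<theta> * B + B > 0" using c by (simp add: algebra_simps) (smt (verit) zero_less_power c)
  have "c^2 * (c^2 + 2 * cos \<theta> * B - (sin \<theta> / c)^2 * B^2) = (c^2 + cos \<theta> * B - B) * (c^2 + cos \<theta> * B + B)"
  proof -
    have sc: "(sin \<theta> / c)^2 = (1 - (cos \<theta>)^2) / c^2" by (simp add: power_divide sin_squared_eq)
    show ?thesis unfolding sc using c by (simp add: field_simps power2_eq_square)
  qed
  then have "c^2 * (c^2 + 2 * cos \<theta> * B - (sin \<theta> / c)^2 * B^2) > 0" using f1 f2 by simp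
  then show ?thesis using c by (simp add: zero_less_mult_iff)
qed
lemma alg2:
  fixes er ep C S p l1 l2 c D ct st B q :: real
  assumes B: "B = l1^2*C^2 + l2^2*S^2" and q: "q = D*B" and CS: "C^2+S^2=1" and p2: "p^2 = c^2 + 2*ct*B - D^2*B^2"
    and Dc: "D*c = st" and Bpos: "B > 0" and er: "er > 0" and ep: "ep > 0"
  defines "E \<equiv> of_real er * (of_real C + \<i> * of_real S)"
    and "Ec \<equiv> of_real er * (of_real C - \<i> * of_real S)"
    and "a \<equiv> of_real q + \<i> * of_real p" and "ca \<equiv> of_real q - \<i> * of_real p"
  shows "((E * a * of_real ep - \<i> * (E * of_real (c * ep))) / 2) * ((Ec * ca * of_real ep - \<i> * (Ec * of_real (c * ep))) / 2)
     / ((complex_of_real l1)\<^sup>2 * (E * of_real ep + Ec * of_real ep)\<^sup>2 - (complex_of_real l2)\<^sup>2 * (E * of_real ep - Ec * of_real ep)\<^sup>2)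
     = (of_real ct - \<i> * of_real st) / 8"
proof -
  have den: "(complex_of_real l1)\<^sup>2 * (E * of_real ep + Ec * of_real ep)\<^sup>2 - (complex_of_real l2)\<^sup>2 * (E * of_real ep - Ec * of_real ep)\<^sup>2
     = 4 * of_real er^2 * of_real ep^2 * of_real B"
  proof -
    have 1: "E * of_real ep + Ec * of_real ep = 2 * of_real er * of_real ep * of_real C"
      unfolding E_def Ec_def by (simp add: algebra_simps)
    have 2: "E * of_real ep - Ec * of_real ep = 2 * \<i> * of_real er * of_real ep * of_real S"
      unfolding E_def Ec_def by (simp add: algebra_simps)
    show ?thesis unfolding 1 2 B by (simp add: algebra_simps power2_eq_square)
  qed
  have EE: "E * Ec = of_real er^2"
  proof -
    have "E * Ec = of_real er^2 * of_real (C^2 + S^2)" unfolding E_def Ec_def by (simp add: algebra_simps power2_eq_square)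
    then show ?thesis using CS by simp
  qed
  have P: "(a - \<i> * of_real c) * (ca - \<i> * of_real c) = of_real (2*B) * (of_real ct - \<i> * of_real st)"
  proof -
    have "(a - \<i> * of_real c) * (ca - \<i> * of_real c) = of_real (q^2 + p^2 - c^2) - \<i> * of_real (2*c*q)"
      unfolding a_def ca_def by (simp add: algebra_simps power2_eq_square)
    also have "q^2 + p^2 - c^2 = 2*B*ct" unfolding p2 q by (simp add: algebra_simps power2_eq_square)
    also have "2*c*q = 2*B* st" unfolding q Dc[symmetric] by (simp add: algebra_simps)
    finally show ?thesis by (simp add: algebra_simps)
  qed
  have L: "((E * a * of_real ep - \<i> * (E * of_real (c * ep))) / 2) * ((Ec * ca * of_real ep - \<i> * (Ec * of_real (c * ep))) / 2)
     = (E * Ec) * of_real ep^2 * ((a - \<i> * of_real c) * (ca - \<i> * of_real c)) / 4"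
    by (simp add: algebra_simps power2_eq_square)
  have nz: "of_real er * of_real ep * of_real B \<noteq> (0::complex)" using er ep Bpos by simp
  show ?thesis unfolding L den EE P using nz by (simp add: field_simps power2_eq_square)
qed
theorem proposition5p3:
  fixes l1 l2 c \<theta> :: real and \<phi> f :: "real \<Rightarrow> real" and g :: "complex \<Rightarrow> complex"
  assumes lam: "(l1 > l2 \<and> l2 > 0) \<or> (l1 = 1 \<and> l2 = 1)"
    and Om: "(c, \<theta>) \<in> Omega l1"
    and phi0: "\<phi> 0 = 0"
    and phi': "\<And>u. (\<phi> has_real_derivative
        sqrt (c\<^sup>2 + 2 * cos \<theta> * Bfun l1 l2 \<phi> u - (Dconst c \<theta>)\<^sup>2 * (Bfun l1 l2 \<phi> u)\<^sup>2)) (at u)"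
    and f0: "f 0 = 0"
    and f': "\<And>u. (f has_real_derivative Dconst c \<theta> * Bfun l1 l2 \<phi> u) (at u)"
    and g: "\<And>z. g z = exp (complex_of_real (f (Re z) + c * Im z)) * exp (\<i> * complex_of_real (\<phi> (Re z)))"
  shows "\<forall>z. wz (wzb g) z =
           2 * ((complex_of_real l1)\<^sup>2 * (g z + cnj (g z)) - (complex_of_real l2)\<^sup>2 * (g z - cnj (g z)))
           / ((complex_of_real l1)\<^sup>2 * (g z + cnj (g z))\<^sup>2 - (complex_of_real l2)\<^sup>2 * (g z - cnj (g z))\<^sup>2)
           * wz g z * wzb g z
         \<and> hopf l1 l2 g z = exp (- \<i> * complex_of_real \<theta>) / 8"
proof -
  have l2pos: "l2 > 0" and l21: "l2 \<le> l1" and l1pos: "l1 > 0" using lam by auto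
  have c: "c > 0" and th: "\<bar>\<theta>\<bar> < theta_plus l1 c" using Om unfolding Omega_def by auto
  define Bf where "Bf = Bfun l1 l2 \<phi>"
  define D where "D = Dconst c \<theta>"
  define P where "P u = sqrt (c\<^sup>2 + 2 * cos \<theta> * Bf u - D\<^sup>2 * (Bf u)\<^sup>2)" for u
  have dphi: "(\<phi> has_real_derivative P u) (at u)" for u using phi' unfolding P_def Bf_def D_def .
  have df: "(f has_real_derivative D * Bf u) (at u)" for u using f' unfolding Bf_def D_def .
  have Bb: "0 < Bf u \<and> Bf u \<le> l1^2" for u
  proof -
    have "l2^2 * (cos (\<phi> u))^2 \<le> l1^2 * (cos (\<phi> u))^2" using l21 l2pos by (intro mult_right_mono power_mono) auto
    moreover have "l2^2 * (sin (\<phi> u))^2 \<le> l1^2 * (sin (\<phi> u))^2" using l21 l2pos by (intro mult_right_mono power_mono) auto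
    moreover have "(cos (\<phi> u))^2 + (sin (\<phi> u))^2 = 1" by simp
    moreover have "l2^2 > 0" using l2pos by simp
    ultimately show ?thesis unfolding Bf_def Bfun_def
      by (smt (verit, best) distrib_left mult.commute mult_cancel_right1 zero_less_power)
  qed
  have Qp: "c\<^sup>2 + 2 * cos \<theta> * Bf u - D\<^sup>2 * (Bf u)\<^sup>2 > 0" for u
    using Q_pos[OF l1pos c th, of "Bf u"] Bb[of u] unfolding D_def Dconst_def by auto
  have Pp: "P u > 0" for u unfolding P_def using Qp[of u] by simp
  define B' where "B' u = 2*(l2^2-l1^2)* cos (\<phi> u)* sin (\<phi> u)*P u" for u
  have dB: "(Bf has_real_derivative B' u) (at u)" for u
  proof -
    have "((\<lambda>u. l1\<^sup>2 * (cos (\<phi> u))\<^sup>2 + l2\<^sup>2 * (sin (\<phi> u))\<^sup>2) has_real_derivative B' u) (at u)"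
      unfolding B'_def by (auto intro!: derivative_eq_intros dphi simp: algebra_simps power2_eq_square)
    then show ?thesis unfolding Bf_def Bfun_def by (simp add: fun_eq_iff)
  qed
  define P' where "P' u = (cos \<theta> - D^2 * Bf u) * B' u / P u" for u
  have dP: "(P has_real_derivative P' u) (at u)" for u
  proof -
    have "((\<lambda>u. sqrt (c\<^sup>2 + 2 * cos \<theta> * Bf u - D\<^sup>2 * (Bf u)\<^sup>2)) has_real_derivative P' u) (at u)"
      using Qp[of u] Pp[of u] unfolding P'_def
      by (auto intro!: derivative_eq_intros dB simp: P_def field_simps power2_eq_square)
    then show ?thesis unfolding P_def by (simp add: fun_eq_iff)
  qed
  have pP': "P u * P' u = (cos \<theta> - D^2 * Bf u) * B' u" for u
    using Pp[of u] unfolding P'_def by simp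
  define E where "E u = exp (complex_of_real (f u) + \<i> * complex_of_real (\<phi> u))" for u
  define a where "a u = complex_of_real (D * Bf u) + \<i> * complex_of_real (P u)" for u
  define a' where "a' u = complex_of_real (D * B' u) + \<i> * complex_of_real (P' u)" for u
  have dE: "(E has_vector_derivative E u * a u) (at u)" for u
  proof -
    have w: "((\<lambda>u. complex_of_real (f u) + \<i> * complex_of_real (\<phi> u)) has_vector_derivative a u) (at u)"
      unfolding a_def
      by (intro has_vector_derivative_add has_vector_derivative_mult_right has_vector_derivative_of_real df dphi)
    have "((exp \<circ> (\<lambda>u. complex_of_real (f u) + \<i> * complex_of_real (\<phi> u))) has_vector_derivative a u * E u) (at u)"
      using field_vector_diff_chain_at[OF w, of exp] unfolding E_def by (simp add: DERIV_exp)
    then show ?thesis unfolding E_def by (simp add: o_def mult.commute)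
  qed
  have da: "(a has_vector_derivative a' u) (at u)" for u
    unfolding a_def a'_def
    by (intro has_vector_derivative_add has_vector_derivative_mult_right has_vector_derivative_of_real
        DERIV_cmult dB dP)
  define A1 where "A1 u = E u * (a u + \<i> * complex_of_real c) / 2" for u
  define A1' where "A1' u = E u * a u * (a u + \<i> * complex_of_real c) / 2 + E u * a' u / 2" for u
  have dA1: "(A1 has_vector_derivative A1' u) (at u)" for u
  proof -
    have "((\<lambda>u. E u * (a u + \<i> * complex_of_real c)) has_vector_derivative
        E u * (a' u + 0) + E u * a u * (a u + \<i> * complex_of_real c)) (at u)"
      by (intro has_vector_derivative_mult has_vector_derivative_add dE da has_vector_derivative_const)
    then have "((\<lambda>u. E u * (a u + \<i> * complex_of_real c) / 2) has_vector_derivative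
        (E u * (a' u + 0) + E u * a u * (a u + \<i> * complex_of_real c)) / 2) (at u)"
      by (rule has_vector_derivative_divide)
    then show ?thesis unfolding A1_def A1'_def by (simp add: algebra_simps add_divide_distrib)
  qed
  have dEc: "((\<lambda>u. cnj (E u)) has_vector_derivative cnj (E u * a u)) (at u)" for u
    by (intro has_vector_derivative_cnj dE)
  have gform: "g = (\<lambda>z. E (Re z) * of_real (exp (c * Im z)))"
    unfolding E_def by (rule ext) (simp add: g exp_add exp_of_real[symmetric] mult_ac distrib_left)
  have pug: "pu g z = E (Re z) * a (Re z) * of_real (exp (c * Im z))" for z
    unfolding gform by (rule pu_pv_form(1)[OF dE])
  have pvg: "pv g z = E (Re z) * of_real (c * exp (c * Im z))" for z
    unfolding gform by (rule pu_pv_form(2)[OF dE])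
  have wzbg: "wzb g = (\<lambda>z. A1 (Re z) * of_real (exp (c * Im z)))"
    unfolding wzb_def pug pvg A1_def by (rule ext) (simp add: algebra_simps)
  have cg: "(\<lambda>w. cnj (g w)) = (\<lambda>z. cnj (E (Re z)) * of_real (exp (c * Im z)))"
    unfolding gform by (rule ext) simp
  show ?thesis
  proof (intro allI conjI)
    fix z
    define u where "u = Re z"
    define ep where "ep = exp (c * Im z)"
    define er where "er = exp (f u)"
    define C where "C = cos (\<phi> u)"
    define S where "S = sin (\<phi> u)"
    have Ef: "E u = of_real er * (of_real C + \<i> * of_real S)"
      unfolding E_def er_def C_def S_def by (simp add: complex_eq_iff Re_exp Im_exp)
    have Ecf: "cnj (E u) = of_real er * (of_real C - \<i> * of_real S)"
      unfolding Ef by simp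
    have caf: "cnj (a u) = of_real (D * Bf u) - \<i> * of_real (P u)"
      unfolding a_def by simp
    have Bfu: "Bf u = l1^2*C^2 + l2^2*S^2" unfolding Bf_def Bfun_def C_def S_def by simp
    have B'u: "B' u = 2*(l2^2-l1^2)*C*S*P u" unfolding B'_def C_def S_def by simp
    have p2: "(P u)^2 = c^2 + 2*cos \<theta>*Bf u - D^2*(Bf u)^2"
      unfolding P_def using Qp[of u] by simp
    have Dc: "D * c = sin \<theta>" unfolding D_def Dconst_def using c by simp
    have CS: "C^2 + S^2 = 1" unfolding C_def S_def by simp
    have er: "er > 0" and ep: "ep > 0" unfolding er_def ep_def by auto
    have gz: "g z = E u * of_real ep" unfolding gform u_def ep_def ..
    have cgz: "cnj (g z) = cnj (E u) * of_real ep" unfolding gz by simp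
    have wzg: "wz g z = (E u * a u * of_real ep - \<i> * (E u * of_real (c * ep))) / 2"
      unfolding wz_def pug pvg u_def ep_def ..
    have wzbgz: "wzb g z = (E u * a u * of_real ep + \<i> * (E u * of_real (c * ep))) / 2"
      unfolding wzb_def pug pvg u_def ep_def ..
    have wzwzb: "wz (wzb g) z = ((A1' u) * of_real ep - \<i> * (A1 u * of_real (c * ep))) / 2"
      unfolding wz_def wzbg pu_pv_form[OF dA1] u_def ep_def ..
    have wzcg: "wz (\<lambda>w. cnj (g w)) z = (cnj (E u) * cnj (a u) * of_real ep - \<i> * (cnj (E u) * of_real (c * ep))) / 2"
      unfolding wz_def cg pu_pv_form[OF dEc] u_def ep_def by simp
    show "wz (wzb g) z =
           2 * ((complex_of_real l1)\<^sup>2 * (g z + cnj (g z)) - (complex_of_real l2)\<^sup>2 * (g z - cnj (g z)))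
           / ((complex_of_real l1)\<^sup>2 * (g z + cnj (g z))\<^sup>2 - (complex_of_real l2)\<^sup>2 * (g z - cnj (g z))\<^sup>2)
           * wz g z * wzb g z"
      unfolding wzwzb cgz wzg wzbgz A1_def A1'_def
      unfolding gz
      unfolding Ecf
      unfolding Ef a_def[of u] a'_def[of u]
      using alg1[OF Bfu refl B'u refl CS p2 pP'[of u] Bb[THEN conjunct1] er ep Pp[of u, THEN less_imp_neq, THEN not_sym]]
      by this
    show "hopf l1 l2 g z = exp (- \<i> * complex_of_real \<theta>) / 8"
    proof -
      have ex: "exp (- \<i> * complex_of_real \<theta>) = of_real (cos \<theta>) - \<i> * of_real (sin \<theta>)"
        by (simp add: complex_eq_iff Re_exp Im_exp)
      show ?thesis
        unfolding hopf_def wzcg cgz wzg ex caf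
        unfolding gz
        unfolding Ecf
        unfolding Ef a_def[of u]
        by (rule alg2[OF Bfu refl CS p2 Dc Bb[THEN conjunct1] er ep])
    qed
  qed
qed

end
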